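(* Let $X$ be a real Hilbert space, let $\lambda>0$, and let $f\colon X\to\mathbb R$ be Fréchet differentiable with $\nabla f$ Lipschitz continuous with constant $1/\lambda$ (and, as standing assumption, $f(x)\ge-\alpha\|x\|^2-\beta\|x\|+\nu$ for all $x$ for some $\nu,\beta\in\mathbb R$, $\alpha\ge0$). Then: (i) $\mathrm{Id}+\lambda\nabla f$ is maximally monotone; (ii) $f$ is $\tfrac1\lambda$-hypoconvex; (iii) $f+\tfrac{1}{2\lambda}\|\cdot\|^2$ is convex; (iv) for every $\mu\in]0,\lambda[$, $\operatorname{Prox}_{\mu f}$ is single-valued; (v) for every $\mu\in]0,\lambda[$, $\operatorname{Prox}_{\mu f}$ is $\tfrac{\lambda-\mu}{\lambda}$-cocoercive; (vi) for every $\mu\in]0,\lambda[$, $\operatorname{Prox}_{\mu f}=J_{\mu\hat\partial f}=(\mathrm{Id}+\mu\nabla f)^{-1}$; (vii) for every $\mu\in]0,\lambda[$, $\mathrm{Id}-\operatorname{Prox}_{\mu f}$ is $\tfrac{\lambda}{2(\lambda-\mu)}$-conically nonexpansive.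
   Context: $\operatorname{Prox}_{\mu f}(x)=\operatorname{argmin}_{y\in X}\big(f(y)+\tfrac{1}{2\mu}\|x-y\|^2\big)$; $J_B=(\mathrm{Id}+B)^{-1}$. $\hat\partial$ denotes any abstract subdifferential, i.e., a rule satisfying: equals the convex subdifferential on proper lsc convex functions; equals $\nabla g$ for continuously differentiable $g$; $0\in\hat\partial g(x)$ at local minimizers $x$; $\hat\partial(g+\beta\|\cdot-x\|^2/2)=\hat\partial g+\beta(\mathrm{Id}-x)$ for all $\beta\in\mathbb R$ (so here $\hat\partial f=\nabla f$). $f$ is $\tfrac1\lambda$-hypoconvex if $f((1-\tau)x+\tau y)\le(1-\tau)f(x)+\tau f(y)+\tfrac{1}{2\lambda}\tau(1-\tau)\|x-y\|^2$ for all $x,y$, $\tau\in]0,1[$. $S$ is $\gamma$-cocoercive if $\langle x-y,Sx-Sy\rangle\ge\gamma\|Sx-Sy\|^2$ for all $x,y$. $T$ is $\alpha$-conically nonexpansive ($\alpha>0$) if $T=(1-\alpha)\mathrm{Id}+\alpha N$ for some nonexpansive $N\colon X\to X$. *)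

theory Defs
  imports "HOL-Analysis.Analysis"
begin

definition Prox :: "real \<Rightarrow> ('a::real_normed_vector \<Rightarrow> real) \<Rightarrow> 'a \<Rightarrow> 'a set" where
  "Prox mu f x = {y. \<forall>z. f y + (norm (x - y))\<^sup>2 / (2 * mu) \<le> f z + (norm (x - z))\<^sup>2 / (2 * mu)}"

text \<open>The proximal map as a function (meaningful when Prox is single-valued).\<close>
definition prox_fun :: "real \<Rightarrow> ('a::real_normed_vector \<Rightarrow> real) \<Rightarrow> 'a \<Rightarrow> 'a" where
  "prox_fun mu f x = (THE y. y \<in> Prox mu f x)"

text \<open>Resolvent J_B = (Id + B)^{-1} of a set-valued operator B.\<close>
definition resolvent :: "('a::real_vector \<Rightarrow> 'a set) \<Rightarrow> 'a \<Rightarrow> 'a set" where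
  "resolvent B x = {y. \<exists>u \<in> B y. x = y + u}"

definition monotone_op :: "('a::real_inner \<Rightarrow> 'a set) \<Rightarrow> bool" where
  "monotone_op A \<longleftrightarrow> (\<forall>x y u v. u \<in> A x \<longrightarrow> v \<in> A y \<longrightarrow> 0 \<le> inner (x - y) (u - v))"

definition maximally_monotone :: "('a::real_inner \<Rightarrow> 'a set) \<Rightarrow> bool" where
  "maximally_monotone A \<longleftrightarrow> monotone_op A \<and>
     (\<forall>x u. (\<forall>y v. v \<in> A y \<longrightarrow> 0 \<le> inner (x - y) (u - v)) \<longrightarrow> u \<in> A x)"

definition hypoconvex :: "real \<Rightarrow> ('a::real_normed_vector \<Rightarrow> real) \<Rightarrow> bool" where
  "hypoconvex c f \<longleftrightarrow> (\<forall>x y \<tau>. 0 < \<tau> \<and> \<tau> < 1 \<longrightarrow>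
     f ((1 - \<tau>) *\<^sub>R x + \<tau> *\<^sub>R y) \<le> (1 - \<tau>) * f x + \<tau> * f y + (c / 2) * \<tau> * (1 - \<tau>) * (norm (x - y))\<^sup>2)"

definition cocoercive :: "real \<Rightarrow> ('a::real_inner \<Rightarrow> 'a) \<Rightarrow> bool" where
  "cocoercive \<gamma> S \<longleftrightarrow> (\<forall>x y. \<gamma> * (norm (S x - S y))\<^sup>2 \<le> inner (x - y) (S x - S y))"

definition nonexpansive :: "('a::real_normed_vector \<Rightarrow> 'a) \<Rightarrow> bool" where
  "nonexpansive N \<longleftrightarrow> (\<forall>x y. norm (N x - N y) \<le> norm (x - y))"

definition conically_nonexpansive :: "real \<Rightarrow> ('a::real_normed_vector \<Rightarrow> 'a) \<Rightarrow> bool" where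
  "conically_nonexpansive \<alpha> T \<longleftrightarrow> 0 < \<alpha> \<and>
     (\<exists>N. nonexpansive N \<and> (\<forall>x. T x = (1 - \<alpha>) *\<^sub>R x + \<alpha> *\<^sub>R N x))"

end

theory Submission
  imports Defs
begin

lemma line_deriv:
  fixes F :: "'a::real_inner \<Rightarrow> real"
  assumes "\<And>x. (F has_derivative (\<lambda>h. inner (G x) h)) (at x)"
  shows "((\<lambda>t. F (y + t *\<^sub>R d)) has_real_derivative inner (G (y + t *\<^sub>R d)) d) (at t)"
proof -
  have "((\<lambda>t. y + t *\<^sub>R d) has_derivative (\<lambda>s. s *\<^sub>R d)) (at t)"
    by (auto intro!: derivative_eq_intros)
  from has_derivative_compose[OF this assms[of "y + t *\<^sub>R d"]]
  have "((\<lambda>t. F (y + t *\<^sub>R d)) has_derivative (\<lambda>s. s * inner (G (y + t *\<^sub>R d)) d)) (at t)"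
    by (simp add: o_def)
  then show ?thesis
    by (simp add: has_real_derivative_iff_has_vector_derivative has_vector_derivative_def mult.commute)
qed

lemma tangent:
  fixes F :: "'a::real_inner \<Rightarrow> real"
  assumes der: "\<And>x. (F has_derivative (\<lambda>h. inner (G x) h)) (at x)"
    and mono: "\<And>x y. 0 \<le> inner (x - y) (G x - G y)"
  shows "F y + inner (G y) (z - y) \<le> F z"
proof -
  define d where "d = z - y"
  define phi where "phi t = F (y + t *\<^sub>R d) - t * inner (G y) d" for t
  have "phi 0 \<le> phi 1"
  proof (rule DERIV_nonneg_imp_nondecreasing[of 0 1])
    fix t :: real assume t: "0 \<le> t" "t \<le> 1"
    have D: "(phi has_real_derivative (inner (G (y + t *\<^sub>R d)) d - inner (G y) d)) (at t)"
      unfolding phi_def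
      by (auto intro!: derivative_eq_intros line_deriv[OF der])
    have "0 \<le> inner (G (y + t *\<^sub>R d)) d - inner (G y) d"
    proof (cases "t = 0")
      case True then show ?thesis by simp
    next
      case False
      have "0 \<le> inner ((y + t *\<^sub>R d) - y) (G (y + t *\<^sub>R d) - G y)" by (rule mono)
      also have "\<dots> = t * (inner (G (y + t *\<^sub>R d)) d - inner (G y) d)"
        by (simp add: inner_diff_right inner_commute algebra_simps)
      finally show ?thesis using False t by (simp add: zero_le_mult_iff)
    qed
    then show "\<exists>y. (phi has_real_derivative y) (at t) \<and> 0 \<le> y" using D by blast
  qed simp
  then show ?thesis by (simp add: phi_def d_def)
qed

lemma sqdist_deriv:
  fixes x :: "'a::real_inner"
  shows "((\<lambda>y. (norm (x - y))\<^sup>2) has_derivative (\<lambda>h. inner (2 *\<^sub>R (y - x)) h)) (at y)"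
proof -
  have e: "(\<lambda>y. (norm (x - y))\<^sup>2) = (\<lambda>y. inner (x - y) (x - y))"
    by (simp add: power2_norm_eq_inner)
  show ?thesis unfolding e
    by (auto intro!: derivative_eq_intros simp: inner_diff inner_commute algebra_simps)
qed

lemma sq_deriv:
  fixes x :: "'a::real_inner"
  shows "((\<lambda>y. (norm y)\<^sup>2) has_derivative (\<lambda>h. inner (2 *\<^sub>R x) h)) (at x)"
  using sqdist_deriv[of 0 x] by simp

theorem corollary6p5:
  fixes f :: "'a::{real_inner, complete_space} \<Rightarrow> real"
    and g :: "'a \<Rightarrow> 'a"
    and lam :: real
  assumes lam_pos: "0 < lam"
    and grad: "\<And>x. (f has_derivative (\<lambda>h. inner (g x) h)) (at x)"
    and lip: "lipschitz_on (1 / lam) UNIV g"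
    and lower: "\<exists>a b c. 0 \<le> a \<and> (\<forall>x. f x \<ge> - a * (norm x)\<^sup>2 - b * norm x + c)"
  shows "maximally_monotone (\<lambda>x. {x + lam *\<^sub>R g x})
       \<and> hypoconvex (1 / lam) f
       \<and> convex_on UNIV (\<lambda>x. f x + (norm x)\<^sup>2 / (2 * lam))
       \<and> (\<forall>mu. 0 < mu \<and> mu < lam \<longrightarrow>
              (\<forall>x. \<exists>!y. y \<in> Prox mu f x)
            \<and> cocoercive ((lam - mu) / lam) (prox_fun mu f)
            \<and> Prox mu f = resolvent (\<lambda>y. {mu *\<^sub>R g y})
            \<and> (\<forall>x. Prox mu f x = {y. y + mu *\<^sub>R g y = x})
            \<and> conically_nonexpansive (lam / (2 * (lam - mu))) (\<lambda>x. x - prox_fun mu f x))"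
proof -
  have lipn: "norm (g x - g y) \<le> norm (x - y) / lam" for x y
    using lip unfolding lipschitz_on_def dist_norm by auto
  have mon: "- (norm (x - y))\<^sup>2 / lam \<le> inner (x - y) (g x - g y)" for x y
  proof -
    have "- inner (x - y) (g x - g y) \<le> norm (x - y) * norm (g x - g y)"
      using norm_cauchy_schwarz[of "x - y" "g y - g x"] by (simp add: norm_minus_commute inner_diff_right)
    also have "\<dots> \<le> norm (x - y) * (norm (x - y) / lam)"
      by (rule mult_left_mono[OF lipn]) simp
    finally show ?thesis by (simp add: power2_eq_square)
  qed
  define A where "A z = z + lam *\<^sub>R g z" for z
  have Amon: "0 \<le> inner (x - y) (A x - A y)" for x y
  proof -
    have "inner (x - y) (A x - A y) = (norm (x - y))\<^sup>2 + lam * inner (x - y) (g x - g y)"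
      by (simp add: A_def power2_norm_eq_inner inner_diff inner_add algebra_simps)
    also have "\<dots> \<ge> (norm (x - y))\<^sup>2 + lam * (- (norm (x - y))\<^sup>2 / lam)"
      using mon[of x y] lam_pos by (intro add_left_mono mult_left_mono) auto
    finally show ?thesis using lam_pos by simp
  qed
  have Alip: "norm (A x - A y) \<le> 2 * norm (x - y)" for x y
  proof -
    have "A x - A y = (x - y) + lam *\<^sub>R (g x - g y)" by (simp add: A_def algebra_simps)
    then have "norm (A x - A y) \<le> norm (x - y) + lam * norm (g x - g y)"
      using norm_triangle_ineq[of "x - y" "lam *\<^sub>R (g x - g y)"] lam_pos by simp
    also have "\<dots> \<le> norm (x - y) + lam * (norm (x - y) / lam)"
      using lipn[of x y] lam_pos by (intro add_left_mono mult_left_mono) auto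
    finally show ?thesis using lam_pos by simp
  qed
  have MM: "maximally_monotone (\<lambda>x. {x + lam *\<^sub>R g x})"
    unfolding maximally_monotone_def monotone_op_def
  proof (intro conjI allI impI)
    fix x y u v assume "u \<in> {x + lam *\<^sub>R g x}" "v \<in> {y + lam *\<^sub>R g y}"
    then show "0 \<le> inner (x - y) (u - v)" using Amon[of x y] by (simp add: A_def)
  next
    fix x u assume H: "\<forall>y v. v \<in> {y + lam *\<^sub>R g y} \<longrightarrow> 0 \<le> inner (x - y) (u - v)"
    define w where "w = A x - u"
    define y where "y = x - (1/4) *\<^sub>R w"
    have "0 \<le> inner (x - y) (u - A y)" using H by (simp add: A_def)
    then have "0 \<le> (1/4) * inner w (u - A y)" by (simp add: y_def)
    then have h1: "0 \<le> inner w (u - A y)" by simp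
    have "inner w (u - A y) = - inner w w + inner w (A x - A y)"
      by (simp add: w_def inner_diff inner_add algebra_simps)
    also have "inner w (A x - A y) \<le> norm w * norm (A x - A y)" by (rule norm_cauchy_schwarz)
    also have "norm (A x - A y) \<le> 2 * norm (x - y)" by (rule Alip)
    also have "norm (x - y) = norm w / 4" by (simp add: y_def)
    finally have "inner w w \<le> norm w * (2 * (norm w / 4))" using h1
      by (smt (verit) mult_left_mono norm_ge_zero)
    moreover have "inner w w = (norm w)\<^sup>2" by (simp add: power2_norm_eq_inner)
    ultimately have "(norm w)\<^sup>2 \<le> (norm w)\<^sup>2 / 2" by (simp add: power2_eq_square)
    then have "w = 0" by simp
    then show "u \<in> {x + lam *\<^sub>R g x}" by (simp add: w_def A_def)
  qed
  define h where "h x = f x + (norm x)\<^sup>2 / (2 * lam)" for x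
  define Gh where "Gh x = g x + (1 / lam) *\<^sub>R x" for x
  have hder: "(h has_derivative (\<lambda>v. inner (Gh x) v)) (at x)" for x
  proof -
    have "((\<lambda>y. f y + 1 / (2 * lam) * (norm y)\<^sup>2) has_derivative (\<lambda>v. inner (g x) v + 1 / (2 * lam) * inner (2 *\<^sub>R x) v)) (at x)"
      by (intro has_derivative_add grad has_derivative_mult_right sq_deriv)
    moreover have "(\<lambda>y. f y + 1 / (2 * lam) * (norm y)\<^sup>2) = h" by (auto simp: h_def)
    moreover have "(\<lambda>v. inner (g x) v + 1 / (2 * lam) * inner (2 *\<^sub>R x) v) = (\<lambda>v. inner (Gh x) v)"
      using lam_pos by (auto simp: Gh_def inner_add_left)
    ultimately show ?thesis by simp
  qed
  have Ghmon: "0 \<le> inner (x - y) (Gh x - Gh y)" for x y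
  proof -
    have "inner (x - y) (Gh x - Gh y) = inner (x - y) (g x - g y) + (norm (x - y))\<^sup>2 / lam"
      by (simp add: Gh_def power2_norm_eq_inner inner_diff inner_add algebra_simps add_divide_distrib diff_divide_distrib)
    then show ?thesis using mon[of x y] by simp
  qed
  have CV: "convex_on UNIV h"
  proof (rule convex_onI)
    fix t :: real and x y :: 'a assume t: "0 < t" "t < 1"
    define w where "w = (1 - t) *\<^sub>R x + t *\<^sub>R y"
    have 1: "h w + inner (Gh w) (x - w) \<le> h x" by (rule tangent[OF hder Ghmon])
    have 2: "h w + inner (Gh w) (y - w) \<le> h y" by (rule tangent[OF hder Ghmon])
    have z: "(1 - t) *\<^sub>R (x - w) + t *\<^sub>R (y - w) = 0" by (simp add: w_def algebra_simps)
    have "(1 - t) * inner (Gh w) (x - w) + t * inner (Gh w) (y - w)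
        = inner (Gh w) ((1 - t) *\<^sub>R (x - w) + t *\<^sub>R (y - w))" by (simp add: inner_add_right)
    then have e: "(1 - t) * inner (Gh w) (x - w) + t * inner (Gh w) (y - w) = 0" using z by simp
    have "(1 - t) * (h w + inner (Gh w) (x - w)) + t * (h w + inner (Gh w) (y - w)) \<le> (1 - t) * h x + t * h y"
      using 1 2 t by (intro add_mono mult_left_mono) auto
    then show "h ((1 - t) *\<^sub>R x + t *\<^sub>R y) \<le> (1 - t) * h x + t * h y"
      using e unfolding w_def[symmetric] by (simp add: algebra_simps)
  qed simp
  have HC: "hypoconvex (1 / lam) f"
    unfolding hypoconvex_def
  proof (intro allI impI)
    fix x y :: 'a and \<tau> :: real assume tau: "0 < \<tau> \<and> \<tau> < 1"
    define w where "w = (1 - \<tau>) *\<^sub>R x + \<tau> *\<^sub>R y"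
    have hw: "h w \<le> (1 - \<tau>) * h x + \<tau> * h y"
      unfolding w_def using tau by (intro convex_onD[OF CV]) auto
    have idn: "(norm w)\<^sup>2 = (1 - \<tau>) * (norm x)\<^sup>2 + \<tau> * (norm y)\<^sup>2 - \<tau> * (1 - \<tau>) * (norm (x - y))\<^sup>2"
      unfolding w_def power2_norm_eq_inner
      by (simp add: inner_add inner_diff inner_commute[of y x] algebra_simps)
    have "(1 - \<tau>) * h x + \<tau> * h y - h w
        = (1 - \<tau>) * f x + \<tau> * f y - f w + \<tau> * (1 - \<tau>) * (norm (x - y))\<^sup>2 / (2 * lam)"
      unfolding h_def idn using lam_pos by (simp add: field_simps)
    then show "f w \<le> (1 - \<tau>) * f x + \<tau> * f y + 1 / lam / 2 * \<tau> * (1 - \<tau>) * (norm (x - y))\<^sup>2"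
      using hw by simp
  qed
  have P: "\<forall>mu. 0 < mu \<and> mu < lam \<longrightarrow>
              (\<forall>x. \<exists>!y. y \<in> Prox mu f x)
            \<and> cocoercive ((lam - mu) / lam) (prox_fun mu f)
            \<and> Prox mu f = resolvent (\<lambda>y. {mu *\<^sub>R g y})
            \<and> (\<forall>x. Prox mu f x = {y. y + mu *\<^sub>R g y = x})
            \<and> conically_nonexpansive (lam / (2 * (lam - mu))) (\<lambda>x. x - prox_fun mu f x)"
  proof (intro allI impI)
    fix mu :: real assume mu: "0 < mu \<and> mu < lam"
    have Pchar: "Prox mu f x = {y. y + mu *\<^sub>R g y = x}" for x
    proof -
      define psi where "psi y = f y + (norm (x - y))\<^sup>2 / (2 * mu)" for y
      define Gp where "Gp y = g y + (1 / mu) *\<^sub>R (y - x)" for y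
      have pder: "(psi has_derivative (\<lambda>v. inner (Gp y) v)) (at y)" for y
      proof -
        have "((\<lambda>y. f y + 1 / (2 * mu) * (norm (x - y))\<^sup>2) has_derivative (\<lambda>v. inner (g y) v + 1 / (2 * mu) * inner (2 *\<^sub>R (y - x)) v)) (at y)"
          by (intro has_derivative_add grad has_derivative_mult_right sqdist_deriv)
        moreover have "(\<lambda>y. f y + 1 / (2 * mu) * (norm (x - y))\<^sup>2) = psi" by (auto simp: psi_def)
        moreover have "(\<lambda>v. inner (g y) v + 1 / (2 * mu) * inner (2 *\<^sub>R (y - x)) v) = (\<lambda>v. inner (Gp y) v)"
          using mu by (auto simp: Gp_def inner_add_left)
        ultimately show ?thesis by simp
      qed
      have Gpmon: "0 \<le> inner (a - b) (Gp a - Gp b)" for a b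
      proof -
        have "inner (a - b) (Gp a - Gp b) = inner (a - b) (g a - g b) + (norm (a - b))\<^sup>2 / mu"
          by (simp add: Gp_def power2_norm_eq_inner inner_diff inner_add algebra_simps add_divide_distrib diff_divide_distrib)
        moreover have "(norm (a - b))\<^sup>2 / lam \<le> (norm (a - b))\<^sup>2 / mu"
          using mu by (intro divide_left_mono) auto
        ultimately show ?thesis using mon[of a b] by simp
      qed
      show ?thesis
      proof (intro set_eqI iffI)
        fix y assume "y \<in> Prox mu f x"
        then have "\<forall>z\<in>UNIV. psi y \<le> psi z" by (simp add: Prox_def psi_def)
        then have "(\<lambda>v. inner (Gp y) v) = (\<lambda>v. 0)"
          using differential_zero_maxmin[of y UNIV psi, OF _ _ pder] by auto
        then have "inner (Gp y) (Gp y) = 0" by metis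
        then have "Gp y = 0" by simp
        then have "mu *\<^sub>R Gp y = 0" by simp
        then show "y \<in> {y. y + mu *\<^sub>R g y = x}" using mu
          by (simp add: Gp_def scaleR_add_right algebra_simps)
      next
        fix y assume "y \<in> {y. y + mu *\<^sub>R g y = x}"
        then have "y - x = - (mu *\<^sub>R g y)" by auto
        then have "Gp y = 0" using mu by (simp add: Gp_def)
        then have "psi y \<le> psi z" for z using tangent[OF pder Gpmon, of y z] by simp
        then show "y \<in> Prox mu f x" by (simp add: Prox_def psi_def)
      qed
    qed
    have ex1: "\<exists>!y. y \<in> Prox mu f x" for x
    proof -
      have "\<exists>!y. x - mu *\<^sub>R g y = y"
      proof (rule banach_fix_type[of "mu / lam"])
        show "0 \<le> mu / lam" using mu by simp
        show "mu / lam < 1" using mu by simp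
        show "\<forall>a b. dist (x - mu *\<^sub>R g a) (x - mu *\<^sub>R g b) \<le> mu / lam * dist a b"
        proof (intro allI)
          fix a b
          have "dist (x - mu *\<^sub>R g a) (x - mu *\<^sub>R g b) = mu * norm (g a - g b)"
            using mu by (simp add: dist_norm norm_minus_commute scaleR_diff_right[symmetric])
          also have "\<dots> \<le> mu * (norm (a - b) / lam)" using mu lipn[of a b] by (intro mult_left_mono) auto
          finally show "dist (x - mu *\<^sub>R g a) (x - mu *\<^sub>R g b) \<le> mu / lam * dist a b"
            by (simp add: dist_norm)
        qed
      qed
      moreover have "(x - mu *\<^sub>R g y = y) \<longleftrightarrow> y \<in> Prox mu f x" for y
        unfolding Pchar by (auto simp: algebra_simps)
      ultimately show ?thesis by simp
    qed
    define p where "p = prox_fun mu f"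
    have pf: "p x + mu *\<^sub>R g (p x) = x" for x
      using theI'[OF ex1[of x]] unfolding p_def prox_fun_def Pchar by simp
    have CC: "cocoercive ((lam - mu) / lam) p"
      unfolding cocoercive_def
    proof (intro allI)
      fix x y
      define e where "e = p x - p y"
      have d: "x - y = e + mu *\<^sub>R (g (p x) - g (p y))"
        using pf[of x] pf[of y] unfolding e_def by (simp add: algebra_simps)
      have "inner (x - y) e = (norm e)\<^sup>2 + mu * inner e (g (p x) - g (p y))"
        unfolding d by (simp add: inner_add_left inner_add_right power2_norm_eq_inner inner_commute)
      moreover have "- (norm e)\<^sup>2 / lam \<le> inner e (g (p x) - g (p y))"
        using mon[of "p x" "p y"] unfolding e_def .
      moreover have "(lam - mu) / lam * (norm e)\<^sup>2 = (norm e)\<^sup>2 + mu * (- (norm e)\<^sup>2 / lam)"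
        using lam_pos by (simp add: field_simps)
      ultimately have "(lam - mu) / lam * (norm e)\<^sup>2 \<le> inner (x - y) e"
        using mu by (smt (verit) mult_left_mono)
      then show "(lam - mu) / lam * (norm (p x - p y))\<^sup>2 \<le> inner (x - y) (p x - p y)"
        by (simp add: e_def)
    qed
    have RS: "Prox mu f = resolvent (\<lambda>y. {mu *\<^sub>R g y})"
      unfolding resolvent_def Pchar by (auto simp: fun_eq_iff)
    define \<alpha> where "\<alpha> = lam / (2 * (lam - mu))"
    define \<beta> where "\<beta> = 2 * (lam - mu) / lam"
    have ab: "\<alpha> * \<beta> = 1" using mu by (simp add: \<alpha>_def \<beta>_def field_simps)
    have apos: "0 < \<alpha>" using mu by (simp add: \<alpha>_def)
    have bpos: "0 < \<beta>" using mu by (simp add: \<beta>_def)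
    define N where "N x = x - \<beta> *\<^sub>R p x" for x
    have NE: "nonexpansive N"
      unfolding nonexpansive_def
    proof (intro allI)
      fix x y
      define e where "e = p x - p y"
      define d where "d = x - y"
      have co: "(lam - mu) / lam * (norm e)\<^sup>2 \<le> inner d e"
        using CC unfolding cocoercive_def e_def d_def by blast
      have "(lam - mu) / lam = \<beta> / 2" using lam_pos by (simp add: \<beta>_def field_simps)
      then have "\<beta> / 2 * (norm e)\<^sup>2 \<le> inner d e" using co by metis
      then have "2 * \<beta> * (\<beta> / 2 * (norm e)\<^sup>2) \<le> 2 * \<beta> * inner d e"
        using bpos by (intro mult_left_mono) auto
      then have co2: "\<beta> * \<beta> * (norm e)\<^sup>2 \<le> 2 * \<beta> * inner d e" by simp
      have "N x - N y = d - \<beta> *\<^sub>R e" by (simp add: N_def d_def e_def algebra_simps)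
      moreover have "(norm (d - \<beta> *\<^sub>R e))\<^sup>2 = (norm d)\<^sup>2 - 2 * \<beta> * inner d e + \<beta> * \<beta> * (norm e)\<^sup>2"
        by (simp add: power2_norm_eq_inner inner_diff inner_commute[of e d] algebra_simps)
      ultimately have "(norm (N x - N y))\<^sup>2 \<le> (norm (x - y))\<^sup>2" using co2 by (simp add: d_def)
      then show "norm (N x - N y) \<le> norm (x - y)" by (rule power2_le_imp_le) simp
    qed
    have "x - p x = (1 - \<alpha>) *\<^sub>R x + \<alpha> *\<^sub>R N x" for x
    proof -
      have "\<alpha> *\<^sub>R N x = \<alpha> *\<^sub>R x - (\<alpha> * \<beta>) *\<^sub>R p x" by (simp add: N_def scaleR_diff_right)
      then show ?thesis using ab by (simp add: algebra_simps)
    qed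
    then have CN: "conically_nonexpansive \<alpha> (\<lambda>x. x - p x)"
      unfolding conically_nonexpansive_def using apos NE by blast
    show "(\<forall>x. \<exists>!y. y \<in> Prox mu f x)
            \<and> cocoercive ((lam - mu) / lam) (prox_fun mu f)
            \<and> Prox mu f = resolvent (\<lambda>y. {mu *\<^sub>R g y})
            \<and> (\<forall>x. Prox mu f x = {y. y + mu *\<^sub>R g y = x})
            \<and> conically_nonexpansive (lam / (2 * (lam - mu))) (\<lambda>x. x - prox_fun mu f x)"
      using ex1 CC RS Pchar CN unfolding p_def \<alpha>_def by blast
  qed
  show ?thesis using MM HC CV P unfolding h_def by blast
qed

end
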